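(* Let $k=\mathbf{F}_q$, $F=k((\epsilon))$, $\mathcal{O}=k[[\epsilon]]$, $G=\mathrm{GL}_3$, $K=G(\mathcal{O})$, and let $U_0$ be the group of upper unitriangular $3\times 3$ matrices. Let $\mathbf{i}$ be one of the two reduced words $(1,2,1)$ or $(2,1,2)$ of the longest element $w_0$ of the Weyl group $S_3$. Then for every $u\in U_0(F)$ there exists $(t_1,t_2,t_3)\in F^3$ such that $\mathbf{y}_{\mathbf{i}}(t_1,t_2,t_3)$ is defined and $$uK=\mathbf{y}_{\mathbf{i}}(t_1,t_2,t_3)^{-1}K \quad\text{in } G(F)/K .$$
   Context: For $i=1,2$ let $\mathbf{x}_i(t)=1+tE_{i,i+1}\in U_0$ (with $E_{a,b}$ the elementary matrix), and for a reduced word $\mathbf{i}=(i_1,i_2,i_3)$ put $\mathbf{x}_{\mathbf{i}}(t_1,t_2,t_3)=\mathbf{x}_{i_3}(t_3)\mathbf{x}_{i_2}(t_2)\mathbf{x}_{i_1}(t_1)$. For a matrix $g$ admitting a Gaussian decomposition $g=vtu$ with $v$ lower unitriangular, $t$ diagonal, $u$ upper unitriangular, write $[g]_+=u$. Let $\bar s_i$ be the image of $\begin{bmatrix}0&1\\-1&0\end{bmatrix}$ under the embedding of $\mathrm{SL}_2$ in $G$ in rows/columns $i,i+1$, and $\bar w_0=\bar s_1\bar s_2\bar s_1$. The map $\eta(y)=[\bar w_0 y^{t}]_+$ ($y^t$ the transpose) is a birational automorphism of $U_0$; define the rational map $\mathbf{y}_{\mathbf{i}}=\eta^{-1}\circ\mathbf{x}_{\mathbf{i}}$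 (Berenstein–Fomin–Zelevinsky parametrization), applied over the field $F$. *)

theory Defs
  imports "HOL-Analysis.Analysis" "HOL-Library.Numeral_Type"
          "HOL-Computational_Algebra.Formal_Laurent_Series"
begin

text \<open>Matrices in GL_3 are modelled as elements of 'a^3^3; rows/columns
 1,2,3 of the paper correspond to the indices 0,1,2 of the numeral type 3.\<close>

definition ix :: "nat \<Rightarrow> 3" where
  "ix r = of_nat (r - 1)"

definition elem :: "nat \<Rightarrow> nat \<Rightarrow> 'a::semiring_1^3^3" where
  "elem a b = (\<chi> i j. if i = ix a \<and> j = ix b then 1 else 0)"

definition upper_uni :: "'a::semiring_1^3^3 \<Rightarrow> bool" where
  "upper_uni A \<longleftrightarrow> (\<forall>i j. (i = j \<longrightarrow> A$i$j = 1) \<and> (j < i \<longrightarrow> A$i$j = 0))"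

definition lower_uni :: "'a::semiring_1^3^3 \<Rightarrow> bool" where
  "lower_uni A \<longleftrightarrow> (\<forall>i j. (i = j \<longrightarrow> A$i$j = 1) \<and> (i < j \<longrightarrow> A$i$j = 0))"

definition diagonal :: "'a::semiring_1^3^3 \<Rightarrow> bool" where
  "diagonal A \<longleftrightarrow> (\<forall>i j. i \<noteq> j \<longrightarrow> A$i$j = 0)"

definition U0 :: "('a::semiring_1^3^3) set" where
  "U0 = {A. upper_uni A}"

definition xgen :: "nat \<Rightarrow> 'a::semiring_1 \<Rightarrow> 'a^3^3" where
  "xgen i t = mat 1 + (\<chi> a b. t * elem i (i+1) $ a $ b)"

definition xword :: "nat \<times> nat \<times> nat \<Rightarrow> 'a::semiring_1 \<Rightarrow> 'a \<Rightarrow> 'a \<Rightarrow> 'a^3^3" where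
  "xword w t1 t2 t3 = (case w of (i1, i2, i3) \<Rightarrow> xgen i3 t3 ** xgen i2 t2 ** xgen i1 t1)"

definition gauss_decomp :: "'a::semiring_1^3^3 \<Rightarrow> 'a^3^3 \<Rightarrow> 'a^3^3 \<Rightarrow> 'a^3^3 \<Rightarrow> bool" where
  "gauss_decomp g v t u \<longleftrightarrow> lower_uni v \<and> diagonal t \<and> upper_uni u \<and> g = v ** t ** u"

definition gauss_plus :: "'a::semiring_1^3^3 \<Rightarrow> ('a^3^3) option" where
  "gauss_plus g = (if \<exists>v t u. gauss_decomp g v t u
      then Some (THE u. \<exists>v t. gauss_decomp g v t u) else None)"

text \<open>\<bar>s_i: image of [[0,1],[-1,0]] in rows/columns i,i+1 (1-based).\<close>
definition sbar :: "nat \<Rightarrow> 'a::ring_1^3^3" where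
  "sbar i = (\<chi> a b. if a = ix i \<and> b = ix (i+1) then 1
                   else if a = ix (i+1) \<and> b = ix i then -1
                   else if a = b \<and> a \<noteq> ix i \<and> a \<noteq> ix (i+1) then 1 else 0)"

definition w0bar :: "'a::ring_1^3^3" where
  "w0bar = sbar 1 ** sbar 2 ** sbar 1"

definition eta :: "'a::ring_1^3^3 \<Rightarrow> ('a^3^3) option" where
  "eta y = gauss_plus (w0bar ** transpose y)"

text \<open>The inverse of the birational automorphism \<eta> of U_0: defined at x iff
  x = \<eta>(y) for some y in U_0 at which \<eta> is defined (such y is unique).\<close>
definition eta_inv :: "'a::ring_1^3^3 \<Rightarrow> ('a^3^3) option" where
  "eta_inv x = (if \<exists>y \<in> U0. eta y = Some x
      then Some (THE y. y \<in> U0 \<and> eta y = Some x) else None)"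

definition ybfz :: "nat \<times> nat \<times> nat \<Rightarrow> 'a::ring_1 \<Rightarrow> 'a \<Rightarrow> 'a \<Rightarrow> ('a^3^3) option" where
  "ybfz w t1 t2 t3 = eta_inv (xword w t1 t2 t3)"

definition laurentO :: "('k::zero fls) set" where
  "laurentO = {f. \<forall>n<0. fls_nth f n = 0}"

definition GL3O :: "('k::field fls^3^3) set" where
  "GL3O = {A. (\<forall>i j. A$i$j \<in> laurentO) \<and> invertible A
              \<and> (\<forall>i j. matrix_inv A $i$j \<in> laurentO)}"

end

theory Submission
  imports Defs
begin

lemma exh3: fixes x :: 3 shows "x = 0 \<or> x = 1 \<or> x = 2"
proof (induct x)
  case (of_int z)
  then have "z = 0 \<or> z = 1 \<or> z = 2" by fastforce
  then show ?case by auto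
qed

lemma UNIV3: "(UNIV::3 set) = {0,1,2}"
  using exh3 by auto

lemma sum3: "sum f (UNIV::3 set) = f 0 + f 1 + f 2"
  unfolding UNIV3 by (simp add: ac_simps)

lemma ix_simps[simp]: "ix 1 = 0" "ix 2 = 1" "ix 3 = 2" "ix (Suc 0) = 0" "ix (Suc (Suc 0)) = 1" "ix (Suc (Suc (Suc 0))) = 2"
  by (simp_all add: ix_def)

lemma three_neq[simp]: "(0::3) \<noteq> 1" "(0::3) \<noteq> 2" "(1::3) \<noteq> 2" "(1::3) \<noteq> 0" "(2::3) \<noteq> 0" "(2::3) \<noteq> 1"
  by simp_all

lemma three_less[simp]: "(0::3) < 1" "(0::3) < 2" "(1::3) < 2" "\<not> (1::3) < 0" "\<not> (2::3) < 0" "\<not> (2::3) < 1"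
  by (simp_all add: less_bit1_def bit1.Rep_0 bit1.Rep_1 bit1.Rep_numeral)

definition U3 :: "'a::ring_1 \<Rightarrow> 'a \<Rightarrow> 'a \<Rightarrow> 'a^3^3" where
  "U3 p q r = (\<chi> i j. if i = j then 1 else if i = 0 \<and> j = 1 then p
      else if i = 1 \<and> j = 2 then q else if i = 0 \<and> j = 2 then r else 0)"

lemma U3_nth: "U3 p q r $ i $ j = (if i = j then 1 else if i = 0 \<and> j = 1 then p
      else if i = 1 \<and> j = 2 then q else if i = 0 \<and> j = 2 then r else 0)"
  by (simp add: U3_def)

lemma mat_eq3: "(A::'a^3^3) = B \<longleftrightarrow> (\<forall>i\<in>{0,1,2}. \<forall>j\<in>{0,1,2}. A$i$j = B$i$j)"
  by (metis UNIV3 UNIV_I vec_eq_iff)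

lemma U3_mult: "U3 p q r ** U3 p' q' r' = U3 (p+p') (q+q') (r + p*q' + r')"
  by (simp add: mat_eq3 matrix_matrix_mult_def sum3 U3_nth)

lemma U3_one: "U3 0 0 0 = mat 1"
  by (simp add: mat_eq3 U3_nth mat_def)

lemma U0_U3: "(A::'a::ring_1^3^3) \<in> U0 \<Longrightarrow> A = U3 (A$0$1) (A$1$2) (A$0$2)"
proof -
  assume "A \<in> U0"
  then have h: "\<And>i j. (i = j \<longrightarrow> A$i$j = 1) \<and> (j < i \<longrightarrow> A$i$j = 0)"
    unfolding U0_def upper_uni_def by blast
  have "A$0$0 = 1" "A$1$1 = 1" "A$2$2 = 1" "A$1$0 = 0" "A$2$0 = 0" "A$2$1 = 0"
    using h[of 0 0] h[of 1 1] h[of 2 2] h[of 1 0] h[of 2 0] h[of 2 1] by simp_all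
  then show ?thesis unfolding mat_eq3 U3_nth by simp
qed

lemma U3_U0: "U3 p q r \<in> U0"
  unfolding U0_def upper_uni_def
proof (intro CollectI allI conjI impI)
  fix i j :: 3
  show "i = j \<Longrightarrow> U3 p q r $ i $ j = 1" by (simp add: U3_nth)
  show "j < i \<Longrightarrow> U3 p q r $ i $ j = 0"
    using exh3[of i] exh3[of j] by (elim disjE) (simp_all add: U3_nth)
qed

lemma xgen1: "xgen 1 t = U3 t 0 0"
  by (simp add: mat_eq3 U3_nth xgen_def elem_def mat_def)
lemma xgen2: "xgen 2 t = U3 0 t 0"
  by (simp add: mat_eq3 U3_nth xgen_def elem_def mat_def)

lemma xword121: "xword (1,2,1) t1 t2 t3 = U3 (t1+t3) t2 (t3*t2)"
  unfolding xword_def by (simp only: prod.case xgen1 xgen2 U3_mult) (simp add: algebra_simps)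
lemma xword212: "xword (2,1,2) t1 t2 t3 = U3 t2 (t1+t3) (t2*t1)"
  unfolding xword_def by (simp only: prod.case xgen1 xgen2 U3_mult) (simp add: algebra_simps)

lemma w0bar_eq: "w0bar = (\<chi> i j. if (i = 0 \<and> j = 2) \<or> (i = 2 \<and> j = 0) then 1 else if i = 1 \<and> j = 1 then -1 else (0::'a::ring_1))"
  by (simp add: mat_eq3 w0bar_def sbar_def matrix_matrix_mult_def sum3)


lemma U3_inj: "U3 p q r = U3 p' q' r' \<Longrightarrow> p = p' \<and> q = q' \<and> r = r'"
  by (metis (no_types, lifting) U3_nth three_neq)

definition L3 :: "'a::ring_1 \<Rightarrow> 'a \<Rightarrow> 'a \<Rightarrow> 'a^3^3" where
  "L3 p q r = (\<chi> i j. if i = j then 1 else if i = 1 \<and> j = 0 then p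
      else if i = 2 \<and> j = 0 then q else if i = 2 \<and> j = 1 then r else 0)"

definition D3 :: "'a::ring_1 \<Rightarrow> 'a \<Rightarrow> 'a \<Rightarrow> 'a^3^3" where
  "D3 p q r = (\<chi> i j. if i = j \<and> i = 0 then p else if i = j \<and> i = 1 then q
      else if i = j \<and> i = 2 then r else 0)"

lemma L3_nth: "L3 p q r $ i $ j = (if i = j then 1 else if i = 1 \<and> j = 0 then p
      else if i = 2 \<and> j = 0 then q else if i = 2 \<and> j = 1 then r else 0)"
  by (simp add: L3_def)

lemma D3_nth: "D3 p q r $ i $ j = (if i = j \<and> i = 0 then p else if i = j \<and> i = 1 then q
      else if i = j \<and> i = 2 then r else 0)"
  by (simp add: D3_def)

lemma lower_L3: "lower_uni (A::'a::ring_1^3^3) \<Longrightarrow> A = L3 (A$1$0) (A$2$0) (A$2$1)"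
proof -
  assume "lower_uni A"
  then have h: "\<And>i j. (i = j \<longrightarrow> A$i$j = 1) \<and> (i < j \<longrightarrow> A$i$j = 0)"
    unfolding lower_uni_def by blast
  have "A$0$0 = 1" "A$1$1 = 1" "A$2$2 = 1" "A$0$1 = 0" "A$0$2 = 0" "A$1$2 = 0"
    using h[of 0 0] h[of 1 1] h[of 2 2] h[of 0 1] h[of 0 2] h[of 1 2] by simp_all
  then show ?thesis unfolding mat_eq3 L3_nth by simp
qed

lemma upper_U3: "upper_uni (A::'a::ring_1^3^3) \<Longrightarrow> A = U3 (A$0$1) (A$1$2) (A$0$2)"
  using U0_U3 unfolding U0_def by blast

lemma diag_D3: "diagonal (A::'a::ring_1^3^3) \<Longrightarrow> A = D3 (A$0$0) (A$1$1) (A$2$2)"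
proof -
  assume "diagonal A"
  then have h: "\<And>i j. i \<noteq> j \<Longrightarrow> A$i$j = 0"
    unfolding diagonal_def by blast
  have "A$0$1 = 0" "A$0$2 = 0" "A$1$2 = 0" "A$1$0 = 0" "A$2$0 = 0" "A$2$1 = 0"
    using h by simp_all
  then show ?thesis unfolding mat_eq3 D3_nth by simp
qed

lemma L3_lower: "lower_uni (L3 p q r)"
  unfolding lower_uni_def
proof (intro allI conjI impI)
  fix i j :: 3
  show "i = j \<Longrightarrow> L3 p q r $ i $ j = 1" by (simp add: L3_nth)
  show "i < j \<Longrightarrow> L3 p q r $ i $ j = 0"
    using exh3[of i] exh3[of j] by (elim disjE) (simp_all add: L3_nth)
qed

lemma D3_diag: "diagonal (D3 p q r)"
  unfolding diagonal_def by (simp add: D3_nth)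

lemma U3_upper: "upper_uni (U3 p q r)"
  using U3_U0 unfolding U0_def by blast

definition G3 :: "'a::ring_1 \<Rightarrow> 'a \<Rightarrow> 'a \<Rightarrow> 'a^3^3" where
  "G3 a b c = (\<chi> i j. if i = 0 \<and> j = 0 then b else if i = 0 \<and> j = 1 then c
     else if i = 0 \<and> j = 2 then 1 else if i = 1 \<and> j = 0 then -a else if i = 1 \<and> j = 1 then -1
     else if i = 2 \<and> j = 0 then 1 else 0)"

lemma G3_eq: "w0bar ** transpose (U3 a c b) = G3 a b c"
  by (simp add: w0bar_eq G3_def mat_eq3 matrix_matrix_mult_def sum3 transpose_def U3_nth)

lemma LDU_eq: "L3 l1 l2 l3 ** D3 d0 d1 d2 ** U3 p q r =
  (\<chi> i j. if i = 0 \<and> j = 0 then d0 else if i = 0 \<and> j = 1 then d0*p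
     else if i = 0 \<and> j = 2 then d0*r else if i = 1 \<and> j = 0 then l1*d0 else if i = 1 \<and> j = 1 then l1*d0*p + d1
     else if i = 1 \<and> j = 2 then l1*d0*r + d1*q else if i = 2 \<and> j = 0 then l2*d0
     else if i = 2 \<and> j = 1 then l2*d0*p + l3*d1 else l2*d0*r+l3*d1*q+d2)"
  by (simp add: mat_eq3 matrix_matrix_mult_def sum3 L3_nth D3_nth U3_nth)


lemma gauss_G3_unique:
  fixes a b c :: "'a::field"
  assumes "gauss_decomp (G3 a b c) v t u"
  shows "b \<noteq> 0 \<and> a*c \<noteq> b \<and> u = U3 (c/b) (a/(a*c-b)) (1/b)"
proof -
  have lv: "lower_uni v" and dt: "diagonal t" and uu: "upper_uni u" and eq: "G3 a b c = v ** t ** u"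
    using assms unfolding gauss_decomp_def by auto
  define l1 l2 l3 d0 d1 d2 p q r where "l1 = v$1$0" "l2 = v$2$0" "l3 = v$2$1"
    "d0 = t$0$0" "d1 = t$1$1" "d2 = t$2$2" "p = u$0$1" "q = u$1$2" "r = u$0$2"
  have V: "v = L3 l1 l2 l3" using lower_L3[OF lv] by (simp add: l1_l2_l3_d0_d1_d2_p_q_r_def)
  have T: "t = D3 d0 d1 d2" using diag_D3[OF dt] by (simp add: l1_l2_l3_d0_d1_d2_p_q_r_def)
  have U: "u = U3 p q r" using upper_U3[OF uu] by (simp add: l1_l2_l3_d0_d1_d2_p_q_r_def)
  have E: "G3 a b c = L3 l1 l2 l3 ** D3 d0 d1 d2 ** U3 p q r" using eq V T U by simp
  have e00: "b = d0" using arg_cong[OF E, of "\<lambda>M::'a^3^3. M$0$0"] by (simp add: LDU_eq G3_def)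
  have e01: "c = d0*p" using arg_cong[OF E, of "\<lambda>M::'a^3^3. M$0$1"] by (simp add: LDU_eq G3_def)
  have e02: "1 = d0*r" using arg_cong[OF E, of "\<lambda>M::'a^3^3. M$0$2"] by (simp add: LDU_eq G3_def)
  have e10: "-a = l1*d0" using arg_cong[OF E, of "\<lambda>M::'a^3^3. M$1$0"] by (simp add: LDU_eq G3_def)
  have e11: "-1 = l1*d0*p + d1" using arg_cong[OF E, of "\<lambda>M::'a^3^3. M$1$1"] by (simp add: LDU_eq G3_def)
  have e12: "0 = l1*d0*r + d1*q" using arg_cong[OF E, of "\<lambda>M::'a^3^3. M$1$2"] by (simp add: LDU_eq G3_def)
  have e20: "1 = l2*d0" using arg_cong[OF E, of "\<lambda>M::'a^3^3. M$2$0"] by (simp add: LDU_eq G3_def)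
  have e21: "0 = l2*d0*p + l3*d1" using arg_cong[OF E, of "\<lambda>M::'a^3^3. M$2$1"] by (simp add: LDU_eq G3_def)
  have b0: "b \<noteq> 0" using e00 e02 by auto
  have pv: "p = c/b" using e00 e01 b0 by (simp add: field_simps)
  have rv: "r = 1/b" using e00 e02 b0 by (simp add: field_simps)
  have l1v: "l1 = -a/b" using e00 e10 b0 by (simp add: field_simps)
  have d1v: "d1 = (a*c-b)/b" using e11 l1v pv e00 b0 by (simp add: field_simps)
  have d1nz: "d1 \<noteq> 0"
  proof
    assume "d1 = 0"
    then have "l2*d0*p = 0" using e21 by simp
    then have "p = 0" using e20 by (simp add: mult.assoc[symmetric])
    then show False using e11 \<open>d1 = 0\<close> by simp
  qed
  have acb: "a*c \<noteq> b" using d1v d1nz by auto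
  have qv: "q = a/(a*c-b)" using e12 l1v rv d1v e00 b0 acb
    by (simp add: field_simps)
  show ?thesis using b0 acb U pv qv rv by simp
qed


lemma gauss_G3_exists:
  fixes a b c :: "'a::field"
  assumes "b \<noteq> 0" "a*c \<noteq> b"
  shows "gauss_decomp (G3 a b c) (L3 (-a/b) (1/b) (-c/(a*c-b))) (D3 b ((a*c-b)/b) (1/(a*c-b)))
           (U3 (c/b) (a/(a*c-b)) (1/b))"
proof -
  have nz: "a*c - b \<noteq> 0" using assms by simp
  show ?thesis
  unfolding gauss_decomp_def
  using assms nz
  by (simp add: L3_lower D3_diag U3_upper LDU_eq G3_def mat_eq3) (simp add: field_simps)
qed

lemma eta_U3: "eta (U3 a c b :: 'a::field^3^3) =
   (if b \<noteq> 0 \<and> a*c \<noteq> b then Some (U3 (c/b) (a/(a*c-b)) (1/b)) else None)"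
proof (cases "b \<noteq> 0 \<and> a*c \<noteq> b")
  case True
  have ex: "\<exists>v t u. gauss_decomp (G3 a b c) v t u" using gauss_G3_exists True by blast
  have "(THE u. \<exists>v t. gauss_decomp (G3 a b c) v t u) = U3 (c/b) (a/(a*c-b)) (1/b)"
    using gauss_G3_exists[of b a c] True gauss_G3_unique[of a b c]
    by (intro the_equality) blast+
  then show ?thesis using True ex unfolding eta_def G3_eq gauss_plus_def by simp
next
  case False
  then have "\<not> (\<exists>v t u. gauss_decomp (G3 a b c) v t u)" using gauss_G3_unique by blast
  then show ?thesis using False unfolding eta_def G3_eq gauss_plus_def by simp
qed

lemma eta_U0: "eta (U3 a c b :: 'a::field^3^3) = Some x \<Longrightarrow>
   b \<noteq> 0 \<and> a*c \<noteq> b \<and> x = U3 (c/b) (a/(a*c-b)) (1/b)"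
  unfolding eta_U3 by (simp split: if_splits)

lemma eta_inj:
  fixes a b c a' b' c' :: "'a::field"
  assumes "b \<noteq> 0" "a*c \<noteq> b" "b' \<noteq> 0" "a'*c' \<noteq> b'"
    "U3 (c/b) (a/(a*c-b)) (1/b) = U3 (c'/b') (a'/(a'*c'-b')) (1/b')"
  shows "a = a' \<and> b = b' \<and> c = c'"
proof -
  have h: "c/b = c'/b'" "a/(a*c-b) = a'/(a'*c'-b')" "1/b = 1/b'" using U3_inj[OF assms(5)] by auto
  have bb: "b = b'" using h(3) by (simp add: field_simps)
  have cc: "c = c'" using h(1) bb assms(1) by (simp add: field_simps)
  have n1: "a*c - b \<noteq> 0" "a'*c - b \<noteq> 0" using assms bb cc by auto
  have "a*(a'*c-b) = a'*(a*c-b)" using h(2) bb cc n1 by (simp add: field_simps)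
  then have "a*b = a'*b" by (simp add: algebra_simps) (metis eq_commute)
  then have aa: "a = a'" using assms(1) by auto
  show ?thesis using aa bb cc by simp
qed

lemma eta_inv_U3:
  fixes a b c :: "'a::field"
  assumes "b \<noteq> 0" "a*c \<noteq> b"
  shows "eta_inv (U3 (c/b) (a/(a*c-b)) (1/b)) = Some (U3 a c b)"
proof -
  let ?x = "U3 (c/b) (a/(a*c-b)) (1/b)"
  have e: "eta (U3 a c b) = Some ?x" using eta_U3[of a c b] assms by simp
  have "(THE y. y \<in> U0 \<and> eta y = Some ?x) = U3 a c b"
  proof (rule the_equality)
    show "U3 a c b \<in> U0 \<and> eta (U3 a c b) = Some ?x" using e U3_U0 by blast
  next
    fix y assume y: "y \<in> U0 \<and> eta y = Some ?x"
    obtain a' b' c' where Y: "y = U3 a' c' b'" using U0_U3[of y] y by blast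
    have h: "b' \<noteq> 0 \<and> a'*c' \<noteq> b' \<and> ?x = U3 (c'/b') (a'/(a'*c'-b')) (1/b')"
      using eta_U0 y Y by blast
    then have "a = a' \<and> b = b' \<and> c = c'" using eta_inj[OF assms] by blast
    then show "y = U3 a c b" using Y by simp
  qed
  then show ?thesis unfolding eta_inv_def using e U3_U0 by auto
qed


lemma ybfz_121:
  fixes a b c :: "'a::field"
  assumes "b \<noteq> 0" "a*c \<noteq> b" "a \<noteq> 0"
  shows "\<exists>t1 t2 t3. ybfz (1,2,1) t1 t2 t3 = Some (U3 a c b)"
proof -
  have n: "a*c - b \<noteq> 0" using assms by simp
  define t2 t3 where "t2 = a/(a*c-b)" "t3 = (a*c-b)/(a*b)"
  define t1 where "t1 = c/b - t3"
  have e1: "t1 + t3 = c/b" by (simp add: t1_def)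
  have e2: "t3*t2 = 1/b" using assms n by (simp add: t2_t3_def field_simps)
  have "xword (1,2,1) t1 t2 t3 = U3 (c/b) (a/(a*c-b)) (1/b)"
    unfolding xword121 e1 e2 by (simp add: t2_t3_def)
  then show ?thesis unfolding ybfz_def using eta_inv_U3[OF assms(1,2)] by metis
qed

lemma ybfz_212:
  fixes a b c :: "'a::field"
  assumes "b \<noteq> 0" "a*c \<noteq> b" "c \<noteq> 0"
  shows "\<exists>t1 t2 t3. ybfz (2,1,2) t1 t2 t3 = Some (U3 a c b)"
proof -
  have n: "a*c - b \<noteq> 0" using assms by simp
  define t2 t1 where "t2 = c/b" "t1 = 1/c"
  define t3 where "t3 = a/(a*c-b) - t1"
  have e1: "t1 + t3 = a/(a*c-b)" by (simp add: t3_def)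
  have e2: "t2*t1 = 1/b" using assms n by (simp add: t2_t1_def field_simps)
  have "xword (2,1,2) t1 t2 t3 = U3 (c/b) (a/(a*c-b)) (1/b)"
    unfolding xword212 e1 e2 by (simp add: t2_t1_def)
  then show ?thesis unfolding ybfz_def using eta_inv_U3[OF assms(1,2)] by metis
qed

lemma laurentO_iff: "(f::'a::comm_ring_1 fls) \<in> laurentO \<longleftrightarrow> (\<exists>g. f = fps_to_fls g)"
proof
  assume "f \<in> laurentO"
  then have "0 \<le> fls_subdegree f" unfolding laurentO_def by (intro fls_subdegree_ge0I) auto
  then show "\<exists>g. f = fps_to_fls g" using fls_regpart_to_fls_trivial by metis
next
  assume "\<exists>g. f = fps_to_fls g"
  then show "f \<in> laurentO" unfolding laurentO_def by auto
qed

lemma laurentO_add: "f \<in> laurentO \<Longrightarrow> g \<in> laurentO \<Longrightarrow> (f + g :: 'a::comm_ring_1 fls) \<in> laurentO"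
  unfolding laurentO_iff by (metis fps_to_fls_plus)
lemma laurentO_mult: "f \<in> laurentO \<Longrightarrow> g \<in> laurentO \<Longrightarrow> (f * g :: 'a::comm_ring_1 fls) \<in> laurentO"
  unfolding laurentO_iff by (metis fls_times_fps_to_fls)
lemma laurentO_minus: "f \<in> laurentO \<Longrightarrow> g \<in> laurentO \<Longrightarrow> (f - g :: 'a::comm_ring_1 fls) \<in> laurentO"
  unfolding laurentO_iff by (metis fps_to_fls_minus)
lemma laurentO_uminus: "f \<in> laurentO \<Longrightarrow> (- f :: 'a::comm_ring_1 fls) \<in> laurentO"
  unfolding laurentO_iff by (metis fps_to_fls_uminus)
lemma laurentO_0: "(0::'a::comm_ring_1 fls) \<in> laurentO"
  unfolding laurentO_def by simp
lemma laurentO_1: "(1::'a::comm_ring_1 fls) \<in> laurentO"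
  unfolding laurentO_def by simp
lemma laurentO_X: "(fls_X::'a::comm_ring_1 fls) \<in> laurentO"
  unfolding laurentO_def by simp

lemma matrix_inv_props:
  fixes M :: "'a::field^'n^'n"
  assumes "invertible M"
  shows "M ** matrix_inv M = mat 1 \<and> matrix_inv M ** M = mat 1"
  using assms unfolding invertible_def matrix_inv_def by (rule someI_ex)

lemma matrix_inv_eqI:
  fixes M N :: "'a::field^'n^'n"
  assumes "M ** N = mat 1" "N ** M = mat 1"
  shows "matrix_inv M = N"
proof -
  have inv: "invertible M" using assms unfolding invertible_def by blast
  have "matrix_inv M = (N ** M) ** matrix_inv M" using assms by simp
  also have "\<dots> = N ** (M ** matrix_inv M)" by (simp add: matrix_mul_assoc)
  also have "\<dots> = N" using matrix_inv_props[OF inv] by simp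
  finally show ?thesis .
qed

lemma mult_entries_O:
  fixes A B :: "'a::comm_ring_1 fls^3^3"
  assumes "\<forall>i j. A$i$j \<in> laurentO" "\<forall>i j. B$i$j \<in> laurentO"
  shows "\<forall>i j. (A ** B)$i$j \<in> laurentO"
  using assms by (simp add: matrix_matrix_mult_def sum3 laurentO_add laurentO_mult)

lemma GL3O_mult:
  fixes A B :: "'k::field fls^3^3"
  assumes "A \<in> GL3O" "B \<in> GL3O"
  shows "A ** B \<in> GL3O"
proof -
  have iA: "invertible A" and iB: "invertible B" using assms unfolding GL3O_def by auto
  have mi: "matrix_inv (A ** B) = matrix_inv B ** matrix_inv A"
  proof (rule matrix_inv_eqI)
    show "A ** B ** (matrix_inv B ** matrix_inv A) = mat 1"
      using matrix_inv_props[OF iA] matrix_inv_props[OF iB]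
      by (metis matrix_mul_assoc matrix_mul_rid)
    show "matrix_inv B ** matrix_inv A ** (A ** B) = mat 1"
      using matrix_inv_props[OF iA] matrix_inv_props[OF iB]
      by (metis matrix_mul_assoc matrix_mul_rid)
  qed
  show ?thesis using assms unfolding GL3O_def
    by (simp add: invertible_mult mi mult_entries_O)
qed

lemma U3_entries_O: "p \<in> laurentO \<Longrightarrow> q \<in> laurentO \<Longrightarrow> r \<in> laurentO \<Longrightarrow>
   \<forall>i j. (U3 p q r :: 'a::comm_ring_1 fls^3^3)$i$j \<in> laurentO"
  by (simp add: U3_nth laurentO_0 laurentO_1)

lemma U3_GL3O:
  fixes p q r :: "'k::field fls"
  assumes "p \<in> laurentO" "q \<in> laurentO" "r \<in> laurentO"
  shows "U3 p q r \<in> GL3O"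
proof -
  have m1: "U3 p q r ** U3 (-p) (-q) (p*q-r) = mat 1" "U3 (-p) (-q) (p*q-r) ** U3 p q r = mat 1"
    by (simp_all add: U3_mult U3_one[symmetric])
  have inv: "invertible (U3 p q r)" using m1 unfolding invertible_def by blast
  have mi: "matrix_inv (U3 p q r) = U3 (-p) (-q) (p*q-r)" using matrix_inv_eqI[OF m1] .
  have "p*q - r \<in> laurentO" using assms by (simp add: laurentO_mult laurentO_minus)
  then show ?thesis unfolding GL3O_def using inv mi assms
    by (simp add: U3_entries_O laurentO_uminus)
qed

lemma fls_X_ne: "(fls_X::'k::field fls) \<noteq> 0" "(fls_X::'k::field fls) \<noteq> 1"
proof -
  show "(fls_X::'k::field fls) \<noteq> 0" by simp
  show "(fls_X::'k::field fls) \<noteq> 1"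
  proof
    assume "(fls_X::'k::field fls) = 1"
    then have "fls_nth (fls_X::'k::field fls) 1 = fls_nth 1 1" by simp
    then show False by simp
  qed
qed

lemma choose_z:
  fixes b0 d :: "'k::field fls"
  shows "\<exists>z. z \<in> laurentO \<and> z + b0 \<noteq> 0 \<and> z + b0 \<noteq> d"
proof (cases "b0 \<noteq> 0 \<and> b0 \<noteq> d")
  case True then show ?thesis using laurentO_0 by (intro exI[of _ 0]) simp
next
  case F1: False
  show ?thesis
  proof (cases "1 + b0 \<noteq> 0 \<and> 1 + b0 \<noteq> d")
    case True then show ?thesis using laurentO_1 by (intro exI[of _ 1]) simp
  next
    case F2: False
    have h1: "b0 = 0 \<or> b0 = d" using F1 by blast
    have h2: "1 + b0 = 0 \<or> 1 + b0 = d" using F2 by blast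
    have n1: "fls_X + b0 \<noteq> 0"
    proof
      assume eq: "fls_X + b0 = 0"
      then have X: "fls_X = - b0" by (simp add: eq_neg_iff_add_eq_0)
      show False using h1
      proof
        assume "b0 = 0" then show False using X fls_X_ne[where 'k='k] by simp
      next
        assume bd: "b0 = d"
        show False using h2
        proof
          assume "1 + b0 = 0" then have "- b0 = 1" by (metis add.commute add_eq_0_iff minus_equation_iff)
          then show False using X fls_X_ne[where 'k='k] by simp
        next
          assume "1 + b0 = d" then show False using bd by simp
        qed
      qed
    qed
    have n2: "fls_X + b0 \<noteq> d"
    proof
      assume eq: "fls_X + b0 = d"
      show False using h1
      proof
        assume b0: "b0 = 0"
        then have X: "fls_X = d" using eq by simp
        show False using h2
        proof
          assume "1 + b0 = 0" then show False using b0 by simp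
        next
          assume "1 + b0 = d" then show False using b0 X fls_X_ne[where 'k='k] by simp
        qed
      next
        assume "b0 = d" then show False using eq fls_X_ne[where 'k='k] by simp
      qed
    qed
    show ?thesis using laurentO_X n1 n2 by blast
  qed
qed

theorem mainTheorem1:
  fixes u :: "'k::{field,finite} fls^3^3" and w :: "nat \<times> nat \<times> nat"
  assumes "w \<in> {(1,2,1), (2,1,2)}" and "u \<in> U0"
  shows "\<exists>t1 t2 t3 y. ybfz w t1 t2 t3 = Some y \<and>
           (\<lambda>k. u ** k) ` GL3O = (\<lambda>k. matrix_inv y ** k) ` GL3O"
proof -
  obtain p q r where u: "u = U3 p q r" using U0_U3[OF assms(2)] by blast
  define x :: "'k fls" where "x = (if p = 1 then 0 else 1)"
  define wv :: "'k fls" where "wv = (if q = 1 then 0 else 1)"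
  define a where "a = x - p"
  define c where "c = wv - q"
  have xO: "x \<in> laurentO" and wO: "wv \<in> laurentO"
    unfolding x_def wv_def using laurentO_0 laurentO_1 by auto
  have a0: "a \<noteq> 0" unfolding a_def x_def by auto
  have c0: "c \<noteq> 0" unfolding c_def wv_def by auto
  obtain z where zO: "z \<in> laurentO" and z1: "z + (p*q - r - x*q) \<noteq> 0"
      and z2: "z + (p*q - r - x*q) \<noteq> a*c"
    using choose_z by blast
  define b where "b = z + (p*q - r - x*q)"
  have b0: "b \<noteq> 0" and acb: "a*c \<noteq> b" using z1 z2 unfolding b_def by auto
  define y where "y = U3 a c b"
  have ey: "\<exists>t1 t2 t3. ybfz w t1 t2 t3 = Some y"
    using assms(1) ybfz_121[OF b0 acb a0] ybfz_212[OF b0 acb c0] unfolding y_def by auto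
  define v where "v = U3 x wv z"
  define vi where "vi = U3 (-x) (-wv) (x*wv - z)"
  have vK: "v \<in> GL3O" unfolding v_def by (intro U3_GL3O xO wO zO)
  have viK: "vi \<in> GL3O" unfolding vi_def
    by (intro U3_GL3O laurentO_uminus laurentO_minus laurentO_mult xO wO zO)
  have yinv: "matrix_inv y = U3 (-a) (-c) (a*c-b)"
  proof -
    have "U3 a c b ** U3 (-a) (-c) (a*c-b) = mat 1" "U3 (-a) (-c) (a*c-b) ** U3 a c b = mat 1"
      by (simp_all add: U3_mult U3_one[symmetric])
    then show ?thesis unfolding y_def by (rule matrix_inv_eqI)
  qed
  have e1: "-a + x = p" "-c + wv = q" "(a*c-b) + (-a)*wv + z = r"
    unfolding a_def c_def b_def by (simp_all add: algebra_simps)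
  have r1: "u = matrix_inv y ** v"
    unfolding yinv v_def U3_mult e1 u ..
  have e2: "p + - x = -a" "q + - wv = -c" "r + p * - wv + (x*wv - z) = a*c-b"
    unfolding a_def c_def b_def by (simp_all add: algebra_simps)
  have r2: "matrix_inv y = u ** vi"
    unfolding yinv vi_def U3_mult e2 u ..
  have "(\<lambda>k. u ** k) ` GL3O = (\<lambda>k. matrix_inv y ** k) ` GL3O"
  proof
    show "(\<lambda>k. u ** k) ` GL3O \<subseteq> (\<lambda>k. matrix_inv y ** k) ` GL3O"
    proof
      fix m assume "m \<in> (\<lambda>k. u ** k) ` GL3O"
      then obtain k where k: "k \<in> GL3O" "m = u ** k" by blast
      have "m = matrix_inv y ** (v ** k)" using k r1 by (simp add: matrix_mul_assoc)
      moreover have "v ** k \<in> GL3O" using GL3O_mult vK k by blast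
      ultimately show "m \<in> (\<lambda>k. matrix_inv y ** k) ` GL3O" by blast
    qed
    show "(\<lambda>k. matrix_inv y ** k) ` GL3O \<subseteq> (\<lambda>k. u ** k) ` GL3O"
    proof
      fix m assume "m \<in> (\<lambda>k. matrix_inv y ** k) ` GL3O"
      then obtain k where k: "k \<in> GL3O" "m = matrix_inv y ** k" by blast
      have "m = u ** (vi ** k)" using k r2 by (simp add: matrix_mul_assoc)
      moreover have "vi ** k \<in> GL3O" using GL3O_mult viK k by blast
      ultimately show "m \<in> (\<lambda>k. u ** k) ` GL3O" by blast
    qed
  qed
  then show ?thesis using ey by blast
qed

end
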